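(* Let $r>2$ be an integer, $\delta=1/r$, and define $\ell_1=3$, $\ell_i=2\ell_{i-1}-\lceil\delta\ell_{i-1}\rceil$ for $2\le i\le r$. Let $\gamma_i=T_{\rm rel}(\ell_i)$ and $\epsilon_i=(1-q)^{\lceil\delta\ell_i\rceil}$. Then for all $2\le i\le r$, $$\gamma_i\le\frac{2}{1-\sqrt{\epsilon_{i-1}}}\,\gamma_{i-1}.$$
   Context: Fix $q\in(0,1/2)$, $p=1-q$. $T_{\rm rel}(L)$ is the relaxation time (inverse spectral gap) of the East process on $\{1,\dots,L\}$: the Markov chain on $\{0,1\}^{\{1,\dots,L\}}$ with generator $\mathcal L f(\sigma)=\sum_{x}c_x(\sigma)[\pi_x(f)-f](\sigma)$, $c_1\equiv1$, $c_x(\sigma)=1-\sigma_{x-1}$ ($x\ge2$), $\pi_x(f)$ the average over $\sigma_x\sim$ Bernoulli$(p)$; the gap is $\inf_f\sum_x\pi(c_x\mathrm{Var}_xf)/\mathrm{Var}_\pi(f)$ with $\pi$ the product Bernoulli$(p)$ measure. *)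

theory Defs
  imports Complex_Main "HOL-Library.FuncSet"
begin

text \<open>Configurations: sigma :: nat => bool, with sigma x = True
  meaning occupation variable 1 (probability p = 1 - q), restricted to the finite
  set of extensional functions on {1..L}.\<close>

definition east_conf :: "nat \<Rightarrow> (nat \<Rightarrow> bool) set" where
  "east_conf L = PiE {1..L} (\<lambda>_. UNIV)"

definition east_pi :: "real \<Rightarrow> nat \<Rightarrow> (nat \<Rightarrow> bool) \<Rightarrow> real" where
  "east_pi q L \<sigma> = (\<Prod>x\<in>{1..L}. if \<sigma> x then 1 - q else q)"

definition east_E :: "real \<Rightarrow> nat \<Rightarrow> ((nat \<Rightarrow> bool) \<Rightarrow> real) \<Rightarrow> real" where
  "east_E q L f = (\<Sum>\<sigma>\<in>east_conf L. east_pi q L \<sigma> * f \<sigma>)"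

definition east_Var :: "real \<Rightarrow> nat \<Rightarrow> ((nat \<Rightarrow> bool) \<Rightarrow> real) \<Rightarrow> real" where
  "east_Var q L f = east_E q L (\<lambda>\<sigma>. (f \<sigma>)\<^sup>2) - (east_E q L f)\<^sup>2"

definition east_Var_x :: "real \<Rightarrow> nat \<Rightarrow> ((nat \<Rightarrow> bool) \<Rightarrow> real) \<Rightarrow> (nat \<Rightarrow> bool) \<Rightarrow> real" where
  "east_Var_x q x f \<sigma> =
     (1 - q) * (f (\<sigma>(x := True)))\<^sup>2 + q * (f (\<sigma>(x := False)))\<^sup>2
     - ((1 - q) * f (\<sigma>(x := True)) + q * f (\<sigma>(x := False)))\<^sup>2"

definition east_c :: "nat \<Rightarrow> (nat \<Rightarrow> bool) \<Rightarrow> real" where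
  "east_c x \<sigma> = (if x = 1 then 1 else if \<sigma> (x - 1) then 0 else 1)"

definition east_Dir :: "real \<Rightarrow> nat \<Rightarrow> ((nat \<Rightarrow> bool) \<Rightarrow> real) \<Rightarrow> real" where
  "east_Dir q L f = (\<Sum>x\<in>{1..L}. east_E q L (\<lambda>\<sigma>. east_c x \<sigma> * east_Var_x q x f \<sigma>))"

definition east_gap :: "real \<Rightarrow> nat \<Rightarrow> real" where
  "east_gap q L = (INF f \<in> {f. east_Var q L f \<noteq> 0}. east_Dir q L f / east_Var q L f)"

definition T_rel :: "real \<Rightarrow> nat \<Rightarrow> real" where
  "T_rel q L = 1 / east_gap q L"

text \<open>ell r i = l_i with l_1 = 3, l_i = 2 l_(i-1) - ceil(l_(i-1)/r); ell r 0 is unused.\<close>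
fun ell :: "nat \<Rightarrow> nat \<Rightarrow> nat" where
  "ell r 0 = 3"
| "ell r (Suc 0) = 3"
| "ell r (Suc (Suc n)) =
     2 * ell r (Suc n) - nat \<lceil>(1 / real r) * real (ell r (Suc n))\<rceil>"

definition eps :: "real \<Rightarrow> nat \<Rightarrow> nat \<Rightarrow> real" where
  "eps q r i = (1 - q) ^ nat \<lceil>(1 / real r) * real (ell r i)\<rceil>"

end

theory Submission
  imports Defs
begin

definition ee :: "real \<Rightarrow> nat \<Rightarrow> ((nat \<Rightarrow> bool) \<Rightarrow> real) \<Rightarrow> (nat \<Rightarrow> bool) \<Rightarrow> real" where
  "ee q x g \<sigma> = (1 - q) * g (\<sigma>(x := True)) + q * g (\<sigma>(x := False))"

definition EL :: "real \<Rightarrow> nat list \<Rightarrow> ((nat \<Rightarrow> bool) \<Rightarrow> real) \<Rightarrow> (nat \<Rightarrow> bool) \<Rightarrow> real" where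
  "EL q xs g = foldr (ee q) xs g"

definition VL :: "real \<Rightarrow> nat list \<Rightarrow> ((nat \<Rightarrow> bool) \<Rightarrow> real) \<Rightarrow> (nat \<Rightarrow> bool) \<Rightarrow> real" where
  "VL q xs g \<sigma> = EL q xs (\<lambda>\<tau>. (g \<tau>)\<^sup>2) \<sigma> - (EL q xs g \<sigma>)\<^sup>2"

definition indep :: "nat set \<Rightarrow> ((nat \<Rightarrow> bool) \<Rightarrow> real) \<Rightarrow> bool" where
  "indep S g \<longleftrightarrow> (\<forall>\<sigma> x b. x \<in> S \<longrightarrow> g (\<sigma>(x := b)) = g \<sigma>)"

lemma EL_Nil[simp]: "EL q [] g = g" by (simp add: EL_def)
lemma EL_Cons[simp]: "EL q (x # xs) g = ee q x (EL q xs g)" by (simp add: EL_def)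
lemma EL_append: "EL q (xs @ ys) g = EL q xs (EL q ys g)" by (simp add: EL_def)

lemma ee_comm: "ee q x (ee q y g) = ee q y (ee q x g)"
  by (rule ext, cases "x = y") (auto simp: ee_def fun_upd_twist algebra_simps)

lemma ee_idem: "ee q x (ee q x g) = ee q x g"
  by (rule ext) (simp add: ee_def algebra_simps)

lemma EL_ee_comm: "EL q xs (ee q y g) = ee q y (EL q xs g)"
  by (induction xs) (simp_all add: ee_comm)

lemma EL_comm: "EL q xs (EL q ys g) = EL q ys (EL q xs g)"
  by (induction ys) (simp_all add: EL_ee_comm)

lemma EL_absorb1: "y \<in> set xs \<Longrightarrow> EL q xs (ee q y g) = EL q xs g"
proof (induction xs)
  case (Cons z zs)
  show ?case
  proof (cases "y \<in> set zs")
    case True then show ?thesis using Cons by simp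
  next
    case False then have "y = z" using Cons by simp
    then show ?thesis by (simp add: EL_ee_comm ee_idem)
  qed
qed simp

lemma EL_absorb: "set ys \<subseteq> set xs \<Longrightarrow> EL q xs (EL q ys g) = EL q xs g"
  by (induction ys) (simp_all add: EL_absorb1)

lemma EL_add: "EL q xs (\<lambda>\<sigma>. g \<sigma> + h \<sigma>) \<sigma> = EL q xs g \<sigma> + EL q xs h \<sigma>"
proof -
  have "EL q xs (\<lambda>\<sigma>. g \<sigma> + h \<sigma>) = (\<lambda>\<sigma>. EL q xs g \<sigma> + EL q xs h \<sigma>)"
    by (induction xs) (simp_all add: ee_def algebra_simps)
  then show ?thesis by simp
qed

lemma EL_diff: "EL q xs (\<lambda>\<sigma>. g \<sigma> - h \<sigma>) \<sigma> = EL q xs g \<sigma> - EL q xs h \<sigma>"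
proof -
  have "EL q xs (\<lambda>\<sigma>. g \<sigma> - h \<sigma>) = (\<lambda>\<sigma>. EL q xs g \<sigma> - EL q xs h \<sigma>)"
    by (induction xs) (simp_all add: ee_def algebra_simps)
  then show ?thesis by simp
qed

lemma EL_cmult: "EL q xs (\<lambda>\<sigma>. c * g \<sigma>) \<sigma> = c * EL q xs g \<sigma>"
proof -
  have "EL q xs (\<lambda>\<sigma>. c * g \<sigma>) = (\<lambda>\<sigma>. c * EL q xs g \<sigma>)"
    by (induction xs) (simp_all add: ee_def algebra_simps)
  then show ?thesis by simp
qed

lemma EL_cdiv: "EL q xs (\<lambda>\<sigma>. g \<sigma> / c) \<sigma> = EL q xs g \<sigma> / c"
  using EL_cmult[of q xs "1/c" g \<sigma>] by simp

lemma EL_const: "EL q xs (\<lambda>\<sigma>. c) \<sigma> = c"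
proof -
  have "EL q xs (\<lambda>\<sigma>. c) = (\<lambda>\<sigma>. c)"
    by (induction xs) (simp_all add: ee_def algebra_simps)
  then show ?thesis by simp
qed

lemma EL_sum: "EL q xs (\<lambda>\<sigma>. \<Sum>i\<in>I. g i \<sigma>) \<sigma> = (\<Sum>i\<in>I. EL q xs (g i) \<sigma>)"
proof -
  have "EL q xs (\<lambda>\<sigma>. \<Sum>i\<in>I. g i \<sigma>) = (\<lambda>\<sigma>. \<Sum>i\<in>I. EL q xs (g i) \<sigma>)"
    by (induction xs) (simp_all add: ee_def sum.distrib sum_distrib_left)
  then show ?thesis by simp
qed

lemma EL_mono:
  assumes "0 \<le> q" "q \<le> 1" "\<And>\<sigma>. g \<sigma> \<le> h \<sigma>"
  shows "EL q xs g \<sigma> \<le> EL q xs h \<sigma>"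
  using assms(3)
proof (induction xs arbitrary: g h \<sigma>)
  case Nil then show ?case by simp
next
  case (Cons x xs)
  have a: "EL q xs g \<tau> \<le> EL q xs h \<tau>" for \<tau> using Cons by blast
  show ?case using a[of "\<sigma>(x:=True)"] a[of "\<sigma>(x:=False)"] assms(1,2)
    by (simp add: ee_def add_mono mult_left_mono)
qed

lemma EL_nonneg: "0 \<le> q \<Longrightarrow> q \<le> 1 \<Longrightarrow> (\<And>\<sigma>. 0 \<le> g \<sigma>) \<Longrightarrow> 0 \<le> EL q xs g \<sigma>"
  using EL_mono[of q "\<lambda>_. 0" g xs \<sigma>] EL_const[of q xs 0 \<sigma>] by simp

lemma indep_ee_id: "indep S g \<Longrightarrow> x \<in> S \<Longrightarrow> ee q x g = g"
  by (rule ext) (simp add: ee_def indep_def algebra_simps)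

lemma EL_indep_id: "indep S g \<Longrightarrow> set xs \<subseteq> S \<Longrightarrow> EL q xs g = g"
  by (induction xs) (simp_all add: indep_ee_id)

lemma indep_ee: "indep S g \<Longrightarrow> indep S (ee q y g)"
  unfolding indep_def ee_def
proof (intro allI impI)
  fix \<sigma> x b assume a: "\<forall>\<sigma> x b. x \<in> S \<longrightarrow> g (\<sigma>(x := b)) = g \<sigma>" and x: "x \<in> S"
  show "(1 - q) * g (\<sigma>(x := b, y := True)) + q * g (\<sigma>(x := b, y := False)) =
        (1 - q) * g (\<sigma>(y := True)) + q * g (\<sigma>(y := False))"
  proof (cases "x = y")
    case True then show ?thesis by simp
  next
    case False
    then have "\<sigma>(x := b, y := c) = \<sigma>(y := c, x := b)" for c by (simp add: fun_upd_twist)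
    then show ?thesis using a x by simp
  qed
qed

lemma indep_EL: "indep S g \<Longrightarrow> indep S (EL q xs g)"
  by (induction xs) (simp_all add: indep_ee)

lemma indep_ee_own: "indep {y} (ee q y g)"
  unfolding indep_def ee_def by simp

lemma indep_Un: "indep S g \<Longrightarrow> indep T g \<Longrightarrow> indep (S \<union> T) g"
  unfolding indep_def by blast

lemma indep_mono: "indep S g \<Longrightarrow> T \<subseteq> S \<Longrightarrow> indep T g"
  unfolding indep_def by blast

lemma indep_EL_own: "indep (set xs) (EL q xs g)"
proof (induction xs)
  case Nil then show ?case by (simp add: indep_def)
next
  case (Cons x xs)
  have "indep {x} (EL q (x#xs) g)" by (simp add: indep_ee_own)
  moreover have "indep (set xs) (EL q (x#xs) g)" using Cons by (simp add: indep_ee)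
  ultimately show ?case using indep_Un[of "{x}"] by simp
qed

lemma indep_EL_sub: "set ys \<subseteq> set xs \<Longrightarrow> indep (set ys) (EL q xs g)"
  using indep_mono[OF indep_EL_own] by blast

lemma EL_pull:
  assumes "indep (set xs) c"
  shows "EL q xs (\<lambda>\<sigma>. c \<sigma> * g \<sigma>) \<sigma> = c \<sigma> * EL q xs g \<sigma>"
proof -
  have "EL q xs (\<lambda>\<sigma>. c \<sigma> * g \<sigma>) = (\<lambda>\<sigma>. c \<sigma> * EL q xs g \<sigma>)"
    using assms
  proof (induction xs)
    case Nil then show ?case by simp
  next
    case (Cons x xs)
    then have IH: "EL q xs (\<lambda>\<sigma>. c \<sigma> * g \<sigma>) = (\<lambda>\<sigma>. c \<sigma> * EL q xs g \<sigma>)"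
      using indep_mono by fastforce
    have "c (\<sigma>(x := b)) = c \<sigma>" for \<sigma> b using Cons.prems by (simp add: indep_def)
    then show ?case by (simp add: IH ee_def algebra_simps)
  qed
  then show ?thesis by simp
qed

lemma EL_pull2:
  assumes "indep (set xs) c"
  shows "EL q xs (\<lambda>\<sigma>. g \<sigma> * c \<sigma>) \<sigma> = EL q xs g \<sigma> * c \<sigma>"
  using EL_pull[OF assms, of q g \<sigma>] by (simp add: mult.commute)

lemma indep_agree:
  assumes "indep (set ys) h" "\<And>y. y \<notin> set ys \<Longrightarrow> \<sigma> y = \<sigma>' y"
  shows "h \<sigma> = h \<sigma>'"
  using assms
proof (induction ys arbitrary: \<sigma>)
  case Nil then have "\<sigma> = \<sigma>'" by (intro ext) simp
  then show ?case by simp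
next
  case (Cons z zs)
  have i1: "indep (set zs) h" using indep_mono[OF Cons.prems(1)] by auto
  have ag: "(\<sigma>(z := \<sigma>' z)) y = \<sigma>' y" if "y \<notin> set zs" for y
    using Cons.prems(2)[of y] that by (cases "y = z") auto
  have "h \<sigma> = h (\<sigma>(z := \<sigma>' z))" using Cons.prems(1) by (simp add: indep_def)
  also have "\<dots> = h \<sigma>'" apply (rule Cons.IH[OF i1]) using ag by blast
  finally show ?case .
qed

lemma quad_disc:
  fixes A B C :: real
  assumes "\<And>t. 0 \<le> t\<^sup>2 * A - 2 * t * B + C" and A0: "0 \<le> A"
  shows "B\<^sup>2 \<le> A * C"
proof (cases "A = 0")
  case True
  show ?thesis
  proof (rule ccontr)
    assume "\<not> ?thesis"
    then have "B \<noteq> 0" using True by simp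
    have "0 \<le> ((C + 1) / (2 * B))\<^sup>2 * A - 2 * ((C + 1) / (2 * B)) * B + C" by (rule assms)
    with True \<open>B \<noteq> 0\<close> show False by (simp add: field_simps)
  qed
next
  case False
  have e: "(B / A)\<^sup>2 * A - 2 * (B / A) * B + C = C - B\<^sup>2 / A"
    using False by (simp add: field_simps power2_eq_square)
  have "0 \<le> C - B\<^sup>2 / A" using assms(1)[of "B / A"] e by simp
  then have "B\<^sup>2 / A \<le> C" by simp
  then show ?thesis using False A0 by (simp add: divide_le_eq mult.commute)
qed

lemma EL_CS:
  assumes "0 \<le> q" "q \<le> 1"
  shows "(EL q xs (\<lambda>\<sigma>. g \<sigma> * h \<sigma>) \<sigma>)\<^sup>2 \<le> EL q xs (\<lambda>\<sigma>. (g \<sigma>)\<^sup>2) \<sigma> * EL q xs (\<lambda>\<sigma>. (h \<sigma>)\<^sup>2) \<sigma>"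
proof (rule quad_disc)
  fix t :: real
  have f: "(\<lambda>\<tau>. (t * g \<tau> - h \<tau>)\<^sup>2) = (\<lambda>\<tau>. (t\<^sup>2 * (g \<tau>)\<^sup>2 - (2 * t) * (g \<tau> * h \<tau>)) + (h \<tau>)\<^sup>2)"
    by (rule ext) (simp add: power2_eq_square algebra_simps)
  have "0 \<le> EL q xs (\<lambda>\<tau>. (t * g \<tau> - h \<tau>)\<^sup>2) \<sigma>" by (rule EL_nonneg[OF assms]) simp
  also have "\<dots> = t\<^sup>2 * EL q xs (\<lambda>\<sigma>. (g \<sigma>)\<^sup>2) \<sigma> - 2 * t * EL q xs (\<lambda>\<sigma>. g \<sigma> * h \<sigma>) \<sigma> + EL q xs (\<lambda>\<sigma>. (h \<sigma>)\<^sup>2) \<sigma>"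
    unfolding f by (simp add: EL_add EL_diff EL_cmult)
  finally show "0 \<le> t\<^sup>2 * EL q xs (\<lambda>\<sigma>. (g \<sigma>)\<^sup>2) \<sigma> - 2 * t * EL q xs (\<lambda>\<sigma>. g \<sigma> * h \<sigma>) \<sigma> + EL q xs (\<lambda>\<sigma>. (h \<sigma>)\<^sup>2) \<sigma>" .
next
  show "0 \<le> EL q xs (\<lambda>\<sigma>. (g \<sigma>)\<^sup>2) \<sigma>" by (rule EL_nonneg[OF assms]) simp
qed

lemma VL_nonneg:
  assumes "0 \<le> q" "q \<le> 1"
  shows "0 \<le> VL q xs g \<sigma>"
  using EL_CS[OF assms, of xs g "\<lambda>_. 1" \<sigma>] EL_const[of q xs 1 \<sigma>] unfolding VL_def by simp

lemma VL_append:
  "VL q (xs @ ys) g \<sigma> = EL q xs (VL q ys g) \<sigma> + VL q xs (EL q ys g) \<sigma>"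
proof -
  have "EL q xs (VL q ys g) \<sigma> = EL q xs (EL q ys (\<lambda>\<tau>. (g \<tau>)\<^sup>2)) \<sigma> - EL q xs (\<lambda>\<tau>. (EL q ys g \<tau>)\<^sup>2) \<sigma>"
    unfolding VL_def by (rule EL_diff)
  then show ?thesis unfolding VL_def by (simp add: EL_append)
qed

lemma east_Var_x_VL: "east_Var_x q x f \<sigma> = VL q [x] f \<sigma>"
  by (simp add: east_Var_x_def VL_def ee_def)

lemma EL_transport:
  assumes "\<And>\<tau> x b. x \<in> set xs \<Longrightarrow> H (\<tau>(x := b)) = (H \<tau>)(\<phi> x := b)"
  shows "EL q xs (\<lambda>\<tau>. g (H \<tau>)) \<tau> = EL q (map \<phi> xs) g (H \<tau>)"
  using assms
proof (induction xs arbitrary: \<tau>)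
  case Nil then show ?case by simp
next
  case (Cons x xs)
  have IH: "EL q xs (\<lambda>\<tau>. g (H \<tau>)) \<tau>' = EL q (map \<phi> xs) g (H \<tau>')" for \<tau>'
    using Cons by simp
  have h1: "H (\<tau>(x := b)) = (H \<tau>)(\<phi> x := b)" for b by (rule Cons.prems) simp
  show ?case by (simp only: EL_Cons ee_def IH h1 list.map)
qed

lemma east_pi_upd:
  assumes "\<tau> \<in> east_conf n"
  shows "east_pi q (Suc n) (\<tau>(Suc n := y)) = east_pi q n \<tau> * (if y then 1 - q else q)"
proof -
  have e: "{1..Suc n} = insert (Suc n) {1..n}" by auto
  have "east_pi q (Suc n) (\<tau>(Suc n := y)) = (if y then 1 - q else q) * (\<Prod>x\<in>{1..n}. if (\<tau>(Suc n := y)) x then 1 - q else q)"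
    unfolding east_pi_def e by (simp add: prod.insert)
  also have "(\<Prod>x\<in>{1..n}. if (\<tau>(Suc n := y)) x then 1 - q else q) = east_pi q n \<tau>"
    unfolding east_pi_def by (rule prod.cong) auto
  finally show ?thesis by (simp only: mult.commute)
qed

lemma east_E_EL: "east_E q n g = EL q [1..<Suc n] g (\<lambda>_. undefined)"
proof (induction n arbitrary: g)
  case 0
  have "east_conf 0 = {\<lambda>_. undefined}" unfolding east_conf_def by simp
  then show ?case unfolding east_E_def east_pi_def by simp
next
  case (Suc n)
  let ?h = "\<lambda>(y::bool, \<tau>::nat \<Rightarrow> bool). \<tau>(Suc n := y)"
  have e: "east_conf (Suc n) = ?h ` (UNIV \<times> east_conf n)"
    unfolding east_conf_def using PiE_insert_eq[of "Suc n" "{1..n}" "\<lambda>_. UNIV :: bool set"]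
    by (simp add: atLeastAtMostSuc_conv)
  have inj: "inj_on ?h (UNIV \<times> east_conf n)"
    unfolding east_conf_def using inj_combinator[of "Suc n" "{1..n}" "\<lambda>_. UNIV :: bool set"] by simp
  have "east_E q (Suc n) g = (\<Sum>p\<in>UNIV \<times> east_conf n. east_pi q (Suc n) (?h p) * g (?h p))"
    unfolding east_E_def e by (subst sum.reindex[OF inj]) (auto simp: o_def intro!: sum.cong split: prod.splits)
  also have "\<dots> = (\<Sum>y\<in>UNIV. \<Sum>\<tau>\<in>east_conf n. east_pi q (Suc n) (\<tau>(Suc n := y)) * g (\<tau>(Suc n := y)))"
    unfolding sum.cartesian_product by (intro sum.cong) (auto split: prod.splits)
  also have "\<dots> = (\<Sum>y\<in>UNIV. \<Sum>\<tau>\<in>east_conf n. east_pi q n \<tau> * ((if y then 1 - q else q) * g (\<tau>(Suc n := y))))"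
  proof (intro sum.cong refl)
    fix y \<tau> assume "\<tau> \<in> east_conf n"
    from east_pi_upd[OF this, of q y]
    show "east_pi q (Suc n) (\<tau>(Suc n := y)) * g (\<tau>(Suc n := y)) = east_pi q n \<tau> * ((if y then 1 - q else q) * g (\<tau>(Suc n := y)))"
      by (simp only: mult.assoc)
  qed
  also have "\<dots> = (\<Sum>\<tau>\<in>east_conf n. east_pi q n \<tau> * ee q (Suc n) g \<tau>)"
    by (simp add: UNIV_bool ee_def sum.distrib distrib_left)
  also have "\<dots> = east_E q n (ee q (Suc n) g)" unfolding east_E_def ..
  also have "\<dots> = EL q [1..<Suc n] (ee q (Suc n) g) (\<lambda>_. undefined)" by (rule Suc.IH)
  also have "\<dots> = EL q [1..<Suc (Suc n)] g (\<lambda>_. undefined)"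
    by (simp add: EL_append)
  finally show ?case .
qed

lemma east_Var_EL: "east_Var q n f = VL q [1..<Suc n] f (\<lambda>_. undefined)"
  unfolding east_Var_def VL_def east_E_EL ..

lemma east_Dir_EL: "east_Dir q n f =
   (\<Sum>x\<in>{1..n}. EL q [1..<Suc n] (\<lambda>\<sigma>. east_c x \<sigma> * VL q [x] f \<sigma>) (\<lambda>_. undefined))"
  unfolding east_Dir_def east_E_EL east_Var_x_VL ..

lemma east_c_nonneg: "0 \<le> east_c x \<sigma>" by (simp add: east_c_def)

lemma east_Var_nonneg: "0 \<le> q \<Longrightarrow> q \<le> 1 \<Longrightarrow> 0 \<le> east_Var q n f"
  unfolding east_Var_EL by (rule VL_nonneg)

lemma east_Dir_nonneg: "0 \<le> q \<Longrightarrow> q \<le> 1 \<Longrightarrow> 0 \<le> east_Dir q n f"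
  unfolding east_Dir_EL
  by (intro sum_nonneg EL_nonneg) (auto intro!: mult_nonneg_nonneg east_c_nonneg VL_nonneg)

lemma indep_comb: "indep S f \<Longrightarrow> indep S g \<Longrightarrow> indep S (\<lambda>\<sigma>. F (f \<sigma>) (g \<sigma>))"
  unfolding indep_def by simp

lemma indep_comb1: "indep S f \<Longrightarrow> indep S (\<lambda>\<sigma>. F (f \<sigma>))"
  unfolding indep_def by simp

lemma indep_VL: "indep S f \<Longrightarrow> indep S (VL q xs f)"
proof -
  assume a: "indep S f"
  have "indep S (\<lambda>\<sigma>. (f \<sigma>)\<^sup>2)" by (rule indep_comb1[OF a])
  then have "indep S (EL q xs (\<lambda>\<sigma>. (f \<sigma>)\<^sup>2))" by (rule indep_EL)
  moreover have "indep S (EL q xs f)" by (rule indep_EL[OF a])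
  ultimately have "indep S (\<lambda>\<sigma>. EL q xs (\<lambda>\<sigma>. (f \<sigma>)\<^sup>2) \<sigma> - (EL q xs f \<sigma>)\<^sup>2)"
    by (rule indep_comb)
  then show ?thesis unfolding VL_def[abs_def] .
qed

lemma VL_indep_zero: "indep (set xs) f \<Longrightarrow> VL q xs f \<sigma> = 0"
proof -
  assume a: "indep (set xs) f"
  have "indep (set xs) (\<lambda>\<sigma>. (f \<sigma>)\<^sup>2)" by (rule indep_comb1[OF a])
  then show ?thesis unfolding VL_def using EL_indep_id[OF a] EL_indep_id by simp
qed

lemma upt_split: "i \<le> j \<Longrightarrow> j \<le> k \<Longrightarrow> [i..<k] = [i..<j] @ [j..<k]"
  using upt_add_eq_append[of i j "k - j"] by simp

lemma map_add_upt': "map (\<lambda>x. x + a) [i..<j] = [i + a..<j + a]"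
  by (induction j) auto

definition ratio_set :: "real \<Rightarrow> nat \<Rightarrow> real set" where
  "ratio_set q n = (\<lambda>f. east_Dir q n f / east_Var q n f) ` {f. east_Var q n f \<noteq> 0}"

lemma gap_ratio: "east_gap q n = Inf (ratio_set q n)"
  unfolding east_gap_def ratio_set_def ..

lemma ratio_bdd: "0 \<le> q \<Longrightarrow> q \<le> 1 \<Longrightarrow> bdd_below (ratio_set q n)"
  unfolding ratio_set_def
  by (rule bdd_belowI[of _ 0]) (auto intro!: divide_nonneg_nonneg east_Dir_nonneg east_Var_nonneg)

lemma ratio_nonempty:
  assumes "0 < q" "q < 1" "1 \<le> n"
  shows "ratio_set q n \<noteq> {}"
proof -
  define f0 :: "(nat \<Rightarrow> bool) \<Rightarrow> real" where "f0 \<sigma> = (if \<sigma> 1 then 1 else 0)" for \<sigma>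
  have l: "[1..<Suc n] = 1 # [2..<Suc n]" using assms(3) by (simp add: upt_conv_Cons numeral_2_eq_2)
  have i0: "indep (set [2..<Suc n]) f0" unfolding indep_def f0_def by auto
  have i1: "indep (set [2..<Suc n]) (\<lambda>\<sigma>. (f0 \<sigma>)\<^sup>2)" by (rule indep_comb1[OF i0])
  have "east_Var q n f0 = (1 - q) - (1 - q)\<^sup>2"
    unfolding east_Var_EL VL_def l using EL_indep_id[OF i0] EL_indep_id[OF i1]
    by (simp add: ee_def f0_def)
  also have "\<dots> \<noteq> 0" using assms by (simp add: power2_eq_square algebra_simps)
  finally show ?thesis unfolding ratio_set_def by auto
qed

lemma gap_nonneg:
  assumes "0 < q" "q < 1" "1 \<le> n"
  shows "0 \<le> east_gap q n"
  unfolding gap_ratio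
proof (rule cInf_greatest[OF ratio_nonempty[OF assms]])
  fix x assume "x \<in> ratio_set q n"
  then show "0 \<le> x" unfolding ratio_set_def using assms
    by (auto intro!: divide_nonneg_nonneg east_Dir_nonneg east_Var_nonneg)
qed

lemma gap_lower:
  assumes "0 < q" "q < 1" "1 \<le> n" "\<And>f. east_Var q n f \<noteq> 0 \<Longrightarrow> c * east_Var q n f \<le> east_Dir q n f"
  shows "c \<le> east_gap q n"
  unfolding gap_ratio
proof (rule cInf_greatest[OF ratio_nonempty[OF assms(1-3)]])
  fix x assume "x \<in> ratio_set q n"
  then obtain f where f: "east_Var q n f \<noteq> 0" "x = east_Dir q n f / east_Var q n f"
    unfolding ratio_set_def by auto
  have "0 < east_Var q n f" using f(1) east_Var_nonneg[of q n f] assms(1,2) by simp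
  then show "c \<le> x" using assms(4)[OF f(1)] f(2) by (simp add: pos_le_divide_eq)
qed

lemma poincare:
  assumes "0 < q" "q < 1" "0 < east_gap q n"
  shows "east_Var q n G \<le> east_Dir q n G / east_gap q n"
proof (cases "east_Var q n G = 0")
  case True then show ?thesis using assms east_Dir_nonneg[of q n G] by simp
next
  case False
  have "east_gap q n \<le> east_Dir q n G / east_Var q n G"
    unfolding gap_ratio
    by (rule cInf_lower) (use False ratio_bdd assms in \<open>auto simp: ratio_set_def\<close>)
  moreover have "0 < east_Var q n G" using False east_Var_nonneg[of q n G] assms(1,2) by simp
  ultimately have "east_gap q n * east_Var q n G \<le> east_Dir q n G" by (simp add: le_divide_eq)
  then show ?thesis using assms(3) by (simp add: le_divide_eq mult.commute)
qed

lemma GP: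
  assumes q: "0 < q" "q < 1" and gp: "0 < east_gap q n" and mn: "m \<le> n"
    and bd: "a = 0 \<or> \<not> \<sigma> a"
  shows "VL q [Suc a..<Suc (a + m)] g \<sigma> \<le>
    (\<Sum>y\<in>{Suc a..a + m}. EL q [Suc a..<Suc (a + m)] (\<lambda>\<tau>. east_c y \<tau> * VL q [y] g \<tau>) \<sigma>) / east_gap q n"
proof -
  define H where "H \<tau> = (\<lambda>y. if a < y \<and> y \<le> a + m then \<tau> (y - a) else \<sigma> y)" for \<tau> :: "nat \<Rightarrow> bool"
  define G where "G \<tau> = g (H \<tau>)" for \<tau>
  define blk where "blk = [Suc a..<Suc (a + m)]"
  define t0 :: "nat \<Rightarrow> bool" where "t0 = (\<lambda>_. undefined)"
  have Hupd: "H (\<tau>(x := b)) = (H \<tau>)(x + a := b)" if "x \<in> {1..m}" for \<tau> x b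
    using that unfolding H_def by (intro ext) auto
  have Hout: "H \<tau> y = \<sigma> y" if "y \<notin> set blk" for \<tau> y
    using that unfolding H_def blk_def by auto
  have Hin: "H \<tau> (x + a) = \<tau> x" if "x \<in> {1..m}" for \<tau> x
    using that unfolding H_def by auto
  have mapb: "map (\<lambda>x. x + a) [1..<Suc m] = blk" unfolding blk_def map_add_upt' by (simp add: add.commute)
  have trans: "EL q [1..<Suc m] (\<lambda>\<tau>. h (H \<tau>)) t0 = EL q blk h \<sigma>" for h
  proof -
    have "EL q [1..<Suc m] (\<lambda>\<tau>. h (H \<tau>)) t0 = EL q (map (\<lambda>x. x + a) [1..<Suc m]) h (H t0)"
      by (rule EL_transport) (auto intro: Hupd)
    also have "\<dots> = EL q blk h (H t0)" unfolding mapb ..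
    also have "\<dots> = EL q blk h \<sigma>" by (rule indep_agree[OF indep_EL_own]) (rule Hout)
    finally show ?thesis .
  qed
  have split: "[1..<Suc n] = [1..<Suc m] @ [Suc m..<Suc n]" using mn by (intro upt_split) auto
  have GHind: "H (\<tau>(x := b)) = H \<tau>" if "x \<in> set [Suc m..<Suc n]" for \<tau> x b
    using that unfolding H_def by (intro ext) auto
  have Gind: "indep (set [Suc m..<Suc n]) G"
    unfolding indep_def G_def using GHind by simp
  have drop: "EL q [1..<Suc n] h t0 = EL q [1..<Suc m] h t0" if "indep (set [Suc m..<Suc n]) h" for h
    unfolding split EL_append EL_indep_id[OF that order_refl] ..
  have var: "east_Var q n G = VL q blk g \<sigma>"
  proof -
    have G2: "indep (set [Suc m..<Suc n]) (\<lambda>\<tau>. (G \<tau>)\<^sup>2)" by (rule indep_comb1[OF Gind])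
    have "east_Var q n G = VL q [1..<Suc n] G t0" unfolding east_Var_EL t0_def ..
    also have "\<dots> = EL q [1..<Suc m] (\<lambda>\<tau>. (G \<tau>)\<^sup>2) t0 - (EL q [1..<Suc m] G t0)\<^sup>2"
      unfolding VL_def using drop[OF G2] drop[OF Gind] by simp
    also have "\<dots> = EL q blk (\<lambda>\<tau>. (g \<tau>)\<^sup>2) \<sigma> - (EL q blk g \<sigma>)\<^sup>2"
      unfolding G_def using trans[of "\<lambda>\<tau>. (g \<tau>)\<^sup>2"] trans[of g] by simp
    finally show ?thesis unfolding VL_def .
  qed
  have cx: "east_c x \<tau> = east_c (x + a) (H \<tau>)" if "x \<in> {1..m}" for x \<tau>
  proof (cases "x = 1")
    case True
    then show ?thesis
    proof (cases "a = 0")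
      case False
      then have "H \<tau> a = \<sigma> a" unfolding H_def by simp
      then show ?thesis using True False bd unfolding east_c_def by simp
    qed (simp add: east_c_def)
  next
    case False
    then have x2: "2 \<le> x" using that by simp
    have e: "x + a - 1 = (x - 1) + a" using x2 by simp
    have "H \<tau> (x + a - 1) = \<tau> (x - 1)" unfolding e by (rule Hin) (use that x2 in auto)
    then show ?thesis using x2 unfolding east_c_def by simp
  qed
  have vx: "VL q [x] G \<tau> = VL q [x + a] g (H \<tau>)" if "x \<in> {1..m}" for x \<tau>
  proof -
    have t: "EL q [x] (\<lambda>\<tau>. h (H \<tau>)) \<tau> = EL q [x + a] h (H \<tau>)" for h
      using EL_transport[of "[x]" H "\<lambda>x. x + a" q h \<tau>] Hupd[OF that] by simp
    show ?thesis unfolding VL_def G_def using t[of "\<lambda>\<tau>. (g \<tau>)\<^sup>2"] t[of g] by simp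
  qed
  have cind: "indep (set [Suc m..<Suc n]) (east_c x)" if "x \<in> {1..m}" for x
    using that unfolding indep_def east_c_def by auto
  have vind: "indep (set [Suc m..<Suc n]) (VL q [x] G)" for x
    by (rule indep_VL[OF Gind])
  have dir_term: "EL q [1..<Suc n] (\<lambda>\<tau>. east_c x \<tau> * VL q [x] G \<tau>) t0
      = EL q blk (\<lambda>\<tau>. east_c (x + a) \<tau> * VL q [x + a] g \<tau>) \<sigma>" if "x \<in> {1..m}" for x
  proof -
    have "EL q [1..<Suc n] (\<lambda>\<tau>. east_c x \<tau> * VL q [x] G \<tau>) t0
        = EL q [1..<Suc m] (\<lambda>\<tau>. east_c x \<tau> * VL q [x] G \<tau>) t0"
      by (rule drop, rule indep_comb[OF cind[OF that] vind])
    also have "\<dots> = EL q [1..<Suc m] (\<lambda>\<tau>. (\<lambda>\<tau>'. east_c (x + a) \<tau>' * VL q [x + a] g \<tau>') (H \<tau>)) t0"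
      using cx[OF that] vx[OF that] by simp
    also have "\<dots> = EL q blk (\<lambda>\<tau>. east_c (x + a) \<tau> * VL q [x + a] g \<tau>) \<sigma>" by (rule trans)
    finally show ?thesis .
  qed
  have dir_zero: "EL q [1..<Suc n] (\<lambda>\<tau>. east_c x \<tau> * VL q [x] G \<tau>) t0 = 0"
    if "x \<in> {1..n} - {1..m}" for x
  proof -
    have "set [x] \<subseteq> set [Suc m..<Suc n]" using that by auto
    from indep_mono[OF Gind this] have "indep (set [x]) G" .
    then have "VL q [x] G \<tau> = 0" for \<tau> by (rule VL_indep_zero)
    then show ?thesis using EL_const[of q "[1..<Suc n]" 0 t0] by simp
  qed
  have dir: "east_Dir q n G = (\<Sum>y\<in>{Suc a..a + m}. EL q blk (\<lambda>\<tau>. east_c y \<tau> * VL q [y] g \<tau>) \<sigma>)"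
  proof -
    have "east_Dir q n G = (\<Sum>x\<in>{1..n}. EL q [1..<Suc n] (\<lambda>\<tau>. east_c x \<tau> * VL q [x] G \<tau>) t0)"
      unfolding east_Dir_EL t0_def ..
    also have "\<dots> = (\<Sum>x\<in>{1..m}. EL q [1..<Suc n] (\<lambda>\<tau>. east_c x \<tau> * VL q [x] G \<tau>) t0)"
      by (rule sum.mono_neutral_right) (use mn dir_zero in auto)
    also have "\<dots> = (\<Sum>x\<in>{1..m}. EL q blk (\<lambda>\<tau>. east_c (x + a) \<tau> * VL q [x + a] g \<tau>) \<sigma>)"
      by (rule sum.cong[OF refl]) (rule dir_term)
    also have "\<dots> = (\<Sum>y\<in>{1 + a..m + a}. EL q blk (\<lambda>\<tau>. east_c y \<tau> * VL q [y] g \<tau>) \<sigma>)"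
      by (rule sum.shift_bounds_cl_nat_ivl[symmetric])
    also have "{1 + a..m + a} = {Suc a..a + m}" by auto
    finally show ?thesis .
  qed
  show ?thesis using poincare[OF q gp, of G] unfolding var dir blk_def .
qed

lemma real_key:
  fixes s M X u Y Z1 Z2 :: real
  assumes s: "0 < s" "s < 1" and eq: "(1 - s\<^sup>2) * M = X + u"
    and cx: "X\<^sup>2 \<le> (1 - s\<^sup>2) * Y" and c1: "u\<^sup>2 \<le> s\<^sup>2 * Z1" and c2: "u\<^sup>2 \<le> (1 - s\<^sup>2) * Z2"
  shows "M\<^sup>2 \<le> (Y + s * (Z1 + Z2)) / (1 - s)"
proof -
  define e where "e = 1 - s\<^sup>2"
  have "s * s < 1 * 1" using s by (intro mult_strict_mono) auto
  then have e0: "0 < e" unfolding e_def by (simp add: power2_eq_square)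
  have ef: "e = (1 - s) * (1 + s)" unfolding e_def by (simp add: power2_eq_square algebra_simps)
  have h1: "u\<^sup>2 \<le> s\<^sup>2 * e * (Z1 + Z2)"
  proof -
    have "e * u\<^sup>2 \<le> e * (s\<^sup>2 * Z1)" using c1 e0 by simp
    moreover have "s\<^sup>2 * u\<^sup>2 \<le> s\<^sup>2 * ((1 - s\<^sup>2) * Z2)" using c2 by (simp add: mult_left_mono)
    ultimately have "e * u\<^sup>2 + s\<^sup>2 * u\<^sup>2 \<le> e * (s\<^sup>2 * Z1) + s\<^sup>2 * ((1 - s\<^sup>2) * Z2)" by simp
    then show ?thesis unfolding e_def by (simp add: algebra_simps)
  qed
  have h2: "(X + u)\<^sup>2 \<le> (1 + s) * X\<^sup>2 + (1 + 1 / s) * u\<^sup>2"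
  proof -
    have "0 \<le> (s * X - u)\<^sup>2 / s" using s by simp
    also have "(s * X - u)\<^sup>2 / s = (1 + s) * X\<^sup>2 + (1 + 1 / s) * u\<^sup>2 - (X + u)\<^sup>2"
      using s by (simp add: field_simps power2_eq_square)
    finally show ?thesis by simp
  qed
  have "(1 + s) * X\<^sup>2 \<le> (1 + s) * (e * Y)" using cx s unfolding e_def by (simp add: mult_left_mono)
  moreover have "(1 + 1 / s) * u\<^sup>2 \<le> (1 + 1 / s) * (s\<^sup>2 * e * (Z1 + Z2))"
    using h1 s by (simp add: mult_left_mono)
  moreover have "(1 + 1 / s) * (s\<^sup>2 * e * (Z1 + Z2)) = (1 + s) * e * (s * (Z1 + Z2))"
    using s by (simp add: field_simps power2_eq_square)
  ultimately have "(e * M)\<^sup>2 \<le> e * ((1 + s) * (Y + s * (Z1 + Z2)))"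
    using h2 eq unfolding e_def[symmetric] by (simp add: algebra_simps)
  moreover have "(e * M)\<^sup>2 = e * (e * M\<^sup>2)" by (simp add: power2_eq_square)
  ultimately have "e * (e * M\<^sup>2) \<le> e * ((1 + s) * (Y + s * (Z1 + Z2)))" by simp
  then have "e * M\<^sup>2 \<le> (1 + s) * (Y + s * (Z1 + Z2))"
    using mult_le_cancel_left_pos[OF e0] by blast
  then have "M\<^sup>2 \<le> (1 + s) * (Y + s * (Z1 + Z2)) / e" using e0 by (simp add: le_divide_eq mult.commute)
  also have "\<dots> = (Y + s * (Z1 + Z2)) / (1 - s)"
  proof -
    have aux: "(1 + s) * W / ((1 - s) * (1 + s)) = W / (1 - s)" for W
      using s by (metis divide_divide_eq_left' mult_eq_0_iff nonzero_mult_div_cancel_left add_pos_pos zero_less_one less_irrefl mult.commute)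
    show ?thesis unfolding ef by (rule aux)
  qed
  finally show ?thesis .
qed

lemma block:
  assumes q: "0 \<le> q" "q \<le> 1" and eps: "0 < \<epsilon>" "\<epsilon> < 1"
    and chi01: "\<And>\<sigma>. \<chi> \<sigma> = 0 \<or> \<chi> \<sigma> = 1"
    and chiB: "indep (set B) \<chi>"
    and heps: "\<And>\<sigma>. EL q A (\<lambda>\<sigma>. 1 - \<chi> \<sigma>) \<sigma> = \<epsilon>"
  shows "VL q (A @ B) f \<sigma> \<le>
    (EL q (A @ B) (VL q A f) \<sigma> + EL q (A @ B) (\<lambda>\<sigma>. \<chi> \<sigma> * VL q B f \<sigma>) \<sigma>) / (1 - sqrt \<epsilon>)"
proof -
  define s where "s = sqrt \<epsilon>"
  have s: "0 < s" "s < 1" "s\<^sup>2 = \<epsilon>" unfolding s_def using eps by auto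
  define E where "E = EL q (A @ B)"
  have Eapp: "E g = EL q A (EL q B g)" for g unfolding E_def EL_append ..
  have EE1: "E (EL q A g) = E g" for g
    unfolding Eapp by (subst EL_comm) (simp add: EL_absorb)
  have EE2: "E (EL q B g) = E g" for g
    unfolding Eapp by (simp add: EL_absorb)
  define m where "m = EL q B f"
  define c0 where "c0 = E f"
  define F where "F \<tau> = f \<tau> - m \<tau>" for \<tau>
  define M where "M \<tau> = EL q A F \<tau>" for \<tau>
  have mB: "indep (set B) m" unfolding m_def by (rule indep_EL_own)
  have c0all: "indep (set (A @ B)) c0" unfolding c0_def E_def by (rule indep_EL_own)
  have c0A: "indep (set A) c0" by (rule indep_mono[OF c0all]) auto
  have c0B: "indep (set B) c0" by (rule indep_mono[OF c0all]) auto
  have E1fA: "indep (set A) (EL q A f)" by (rule indep_EL_own)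
  have E1m: "EL q A m \<tau> = c0 \<tau>" for \<tau> unfolding m_def c0_def Eapp ..
  have Mform: "M \<tau> = EL q A f \<tau> - c0 \<tau>" for \<tau>
    unfolding M_def F_def using EL_diff E1m by simp
  have MA: "indep (set A) M" unfolding M_def[abs_def] by (rule indep_EL_own)
  have E1chi: "EL q A \<chi> \<tau> = 1 - \<epsilon>" for \<tau>
    using heps[of \<tau>] EL_diff[of q A "\<lambda>_. 1" \<chi> \<tau>] EL_const[of q A 1 \<tau>] by simp
  have chisq: "(\<chi> \<tau>)\<^sup>2 = \<chi> \<tau>" for \<tau> using chi01[of \<tau>] by auto
  have chisq': "(1 - \<chi> \<tau>)\<^sup>2 = 1 - \<chi> \<tau>" for \<tau> using chi01[of \<tau>] by auto
  have chi0: "0 \<le> \<chi> \<tau>" "\<chi> \<tau> \<le> 1" for \<tau> using chi01[of \<tau>] by auto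
  have PW: "(M \<tau>)\<^sup>2 \<le> (EL q A (\<lambda>\<tau>. \<chi> \<tau> * (F \<tau>)\<^sup>2) \<tau> + s * EL q A (\<lambda>\<tau>. (F \<tau> - M \<tau>)\<^sup>2) \<tau>) / (1 - s)" for \<tau>
  proof -
    define X where "X = EL q A (\<lambda>\<tau>. \<chi> \<tau> * F \<tau>) \<tau>"
    define u where "u = EL q A (\<lambda>\<tau>. (1 - \<chi> \<tau>) * (F \<tau> - M \<tau>)) \<tau>"
    define Y where "Y = EL q A (\<lambda>\<tau>. \<chi> \<tau> * (F \<tau>)\<^sup>2) \<tau>"
    define Z1 where "Z1 = EL q A (\<lambda>\<tau>. (1 - \<chi> \<tau>) * (F \<tau> - M \<tau>)\<^sup>2) \<tau>"
    define Z2 where "Z2 = EL q A (\<lambda>\<tau>. \<chi> \<tau> * (F \<tau> - M \<tau>)\<^sup>2) \<tau>"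
    have "M \<tau> = EL q A F \<tau>" unfolding M_def ..
    also have "\<dots> = EL q A (\<lambda>\<tau>. \<chi> \<tau> * F \<tau> + ((1 - \<chi> \<tau>) * (F \<tau> - M \<tau>) + (1 - \<chi> \<tau>) * M \<tau>)) \<tau>"
      by (rule arg_cong[where f="\<lambda>h. EL q A h \<tau>"]) (rule ext, simp add: algebra_simps)
    also have "\<dots> = X + (u + EL q A (\<lambda>\<tau>. (1 - \<chi> \<tau>) * M \<tau>) \<tau>)"
      unfolding X_def u_def by (simp only: EL_add)
    also have "EL q A (\<lambda>\<tau>. (1 - \<chi> \<tau>) * M \<tau>) \<tau> = \<epsilon> * M \<tau>"
      using EL_pull2[OF MA, of q "\<lambda>\<tau>. 1 - \<chi> \<tau>" \<tau>] heps by simp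
    finally have eq0: "M \<tau> = X + (u + \<epsilon> * M \<tau>)" .
    have "(1 - s\<^sup>2) * M \<tau> = M \<tau> - \<epsilon> * M \<tau>" using s(3) by (simp add: algebra_simps)
    with eq0 have eq: "(1 - s\<^sup>2) * M \<tau> = X + u" by linarith
    have cx: "X\<^sup>2 \<le> (1 - s\<^sup>2) * Y"
    proof -
      have "X\<^sup>2 \<le> EL q A (\<lambda>\<tau>. (\<chi> \<tau>)\<^sup>2) \<tau> * EL q A (\<lambda>\<tau>. (\<chi> \<tau> * F \<tau>)\<^sup>2) \<tau>"
        unfolding X_def using EL_CS[OF q, of A \<chi> "\<lambda>\<tau>. \<chi> \<tau> * F \<tau>" \<tau>] by (simp add: mult.assoc[symmetric] power2_eq_square[symmetric] chisq)
      also have "EL q A (\<lambda>\<tau>. (\<chi> \<tau>)\<^sup>2) \<tau> = 1 - \<epsilon>" using E1chi by (simp add: chisq)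
      also have "(\<lambda>\<tau>. (\<chi> \<tau> * F \<tau>)\<^sup>2) = (\<lambda>\<tau>. \<chi> \<tau> * (F \<tau>)\<^sup>2)"
        by (rule ext) (simp add: power_mult_distrib chisq)
      finally show ?thesis unfolding Y_def using s by simp
    qed
    have c1: "u\<^sup>2 \<le> s\<^sup>2 * Z1"
    proof -
      have "u\<^sup>2 \<le> EL q A (\<lambda>\<tau>. (1 - \<chi> \<tau>)\<^sup>2) \<tau> * EL q A (\<lambda>\<tau>. ((1 - \<chi> \<tau>) * (F \<tau> - M \<tau>))\<^sup>2) \<tau>"
        unfolding u_def using EL_CS[OF q, of A "\<lambda>\<tau>. 1 - \<chi> \<tau>" "\<lambda>\<tau>. (1 - \<chi> \<tau>) * (F \<tau> - M \<tau>)" \<tau>]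
        by (simp add: mult.assoc[symmetric] power2_eq_square[symmetric] chisq')
      also have "EL q A (\<lambda>\<tau>. (1 - \<chi> \<tau>)\<^sup>2) \<tau> = \<epsilon>" using heps by (simp add: chisq')
      also have "(\<lambda>\<tau>. ((1 - \<chi> \<tau>) * (F \<tau> - M \<tau>))\<^sup>2) = (\<lambda>\<tau>. (1 - \<chi> \<tau>) * (F \<tau> - M \<tau>)\<^sup>2)"
        by (rule ext) (simp add: power_mult_distrib chisq')
      finally show ?thesis unfolding Z1_def using s by simp
    qed
    have uneg: "EL q A (\<lambda>\<tau>. \<chi> \<tau> * (F \<tau> - M \<tau>)) \<tau> = - u"
    proof -
      have f2: "(\<lambda>\<tau>. F \<tau> - M \<tau>) = (\<lambda>\<tau>. \<chi> \<tau> * (F \<tau> - M \<tau>) + (1 - \<chi> \<tau>) * (F \<tau> - M \<tau>))"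
        by (rule ext) (simp add: algebra_simps)
      have "EL q A (\<lambda>\<tau>. F \<tau> - M \<tau>) \<tau> = M \<tau> - EL q A M \<tau>" unfolding EL_diff M_def ..
      also have "EL q A M \<tau> = M \<tau>" using EL_indep_id[OF MA order_refl] by simp
      finally have "EL q A (\<lambda>\<tau>. F \<tau> - M \<tau>) \<tau> = 0" by simp
      then show ?thesis unfolding f2 EL_add u_def by simp
    qed
    have c2: "u\<^sup>2 \<le> (1 - s\<^sup>2) * Z2"
    proof -
      have "(- u)\<^sup>2 \<le> EL q A (\<lambda>\<tau>. (\<chi> \<tau>)\<^sup>2) \<tau> * EL q A (\<lambda>\<tau>. (\<chi> \<tau> * (F \<tau> - M \<tau>))\<^sup>2) \<tau>"
        unfolding uneg[symmetric] using EL_CS[OF q, of A \<chi> "\<lambda>\<tau>. \<chi> \<tau> * (F \<tau> - M \<tau>)" \<tau>]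
        by (simp add: mult.assoc[symmetric] power2_eq_square[symmetric] chisq)
      also have "EL q A (\<lambda>\<tau>. (\<chi> \<tau>)\<^sup>2) \<tau> = 1 - \<epsilon>" using E1chi by (simp add: chisq)
      also have "(\<lambda>\<tau>. (\<chi> \<tau> * (F \<tau> - M \<tau>))\<^sup>2) = (\<lambda>\<tau>. \<chi> \<tau> * (F \<tau> - M \<tau>)\<^sup>2)"
        by (rule ext) (simp add: power_mult_distrib chisq)
      finally show ?thesis unfolding Z2_def using s by simp
    qed
    have Zs: "Z1 + Z2 = EL q A (\<lambda>\<tau>. (F \<tau> - M \<tau>)\<^sup>2) \<tau>"
    proof -
      have f3: "(\<lambda>\<tau>. (F \<tau> - M \<tau>)\<^sup>2) = (\<lambda>\<tau>. (1 - \<chi> \<tau>) * (F \<tau> - M \<tau>)\<^sup>2 + \<chi> \<tau> * (F \<tau> - M \<tau>)\<^sup>2)"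
        by (rule ext) (simp add: algebra_simps)
      show ?thesis unfolding f3 EL_add Z1_def Z2_def ..
    qed
    show ?thesis using real_key[OF s(1,2) eq cx c1 c2] unfolding Zs Y_def .
  qed
  have PWE: "E (\<lambda>\<tau>. (M \<tau>)\<^sup>2) \<sigma> \<le> (E (\<lambda>\<tau>. \<chi> \<tau> * (F \<tau>)\<^sup>2) \<sigma> + s * E (\<lambda>\<tau>. (F \<tau> - M \<tau>)\<^sup>2) \<sigma>) / (1 - s)"
  proof -
    have "E (\<lambda>\<tau>. (M \<tau>)\<^sup>2) \<sigma> \<le> E (\<lambda>\<tau>. (EL q A (\<lambda>\<tau>. \<chi> \<tau> * (F \<tau>)\<^sup>2) \<tau> + s * EL q A (\<lambda>\<tau>. (F \<tau> - M \<tau>)\<^sup>2) \<tau>) / (1 - s)) \<sigma>"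
      unfolding E_def by (rule EL_mono[OF q]) (rule PW)
    also have "\<dots> = (E (EL q A (\<lambda>\<tau>. \<chi> \<tau> * (F \<tau>)\<^sup>2)) \<sigma> + s * E (EL q A (\<lambda>\<tau>. (F \<tau> - M \<tau>)\<^sup>2)) \<sigma>) / (1 - s)"
      unfolding E_def by (simp only: EL_cdiv EL_add EL_cmult)
    also have "\<dots> = (E (\<lambda>\<tau>. \<chi> \<tau> * (F \<tau>)\<^sup>2) \<sigma> + s * E (\<lambda>\<tau>. (F \<tau> - M \<tau>)\<^sup>2) \<sigma>) / (1 - s)"
      by (simp only: EE1)
    finally show ?thesis .
  qed
  have Eb: "E (\<lambda>\<tau>. \<chi> \<tau> * (F \<tau>)\<^sup>2) \<sigma> = E (\<lambda>\<tau>. \<chi> \<tau> * VL q B f \<tau>) \<sigma>"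
  proof -
    have m2: "indep (set B) (\<lambda>\<tau>. (m \<tau>)\<^sup>2)" by (rule indep_comb1[OF mB])
    have F2: "EL q B (\<lambda>\<tau>. (F \<tau>)\<^sup>2) \<tau> = VL q B f \<tau>" for \<tau>
    proof -
      have "EL q B (\<lambda>\<tau>. (F \<tau>)\<^sup>2) \<tau> = EL q B (\<lambda>\<tau>. ((f \<tau>)\<^sup>2 - 2 * (m \<tau> * f \<tau>)) + (m \<tau>)\<^sup>2) \<tau>"
        by (rule arg_cong[where f="\<lambda>h. EL q B h \<tau>"]) (rule ext, simp add: F_def power2_eq_square algebra_simps)
      also have "\<dots> = EL q B (\<lambda>\<tau>. (f \<tau>)\<^sup>2) \<tau> - 2 * (m \<tau> * EL q B f \<tau>) + (m \<tau>)\<^sup>2"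
        by (simp only: EL_add EL_diff EL_cmult EL_pull[OF mB] EL_indep_id[OF m2 order_refl])
      also have "\<dots> = VL q B f \<tau>" unfolding VL_def m_def by (simp add: power2_eq_square)
      finally show ?thesis .
    qed
    have "EL q B (\<lambda>\<tau>. \<chi> \<tau> * (F \<tau>)\<^sup>2) = (\<lambda>\<tau>. \<chi> \<tau> * VL q B f \<tau>)"
      by (rule ext) (simp only: EL_pull[OF chiB] F2)
    then show ?thesis using EE2[of "\<lambda>\<tau>. \<chi> \<tau> * (F \<tau>)\<^sup>2"] by simp
  qed
  define k where "k \<tau> = f \<tau> - EL q A f \<tau>" for \<tau>
  define j where "j \<tau> = m \<tau> - c0 \<tau>" for \<tau>
  have jB: "indep (set B) j" unfolding j_def[abs_def] by (rule indep_comb[OF mB c0B])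
  have FM: "F \<tau> - M \<tau> = k \<tau> - j \<tau>" for \<tau> unfolding F_def Mform k_def j_def by simp
  have Ea: "E (\<lambda>\<tau>. (F \<tau> - M \<tau>)\<^sup>2) \<sigma> \<le> E (VL q A f) \<sigma>"
  proof -
    have "E (\<lambda>\<tau>. (F \<tau> - M \<tau>)\<^sup>2) \<sigma> = E (\<lambda>\<tau>. ((k \<tau>)\<^sup>2 - 2 * (k \<tau> * j \<tau>)) + (j \<tau>)\<^sup>2) \<sigma>"
      by (rule arg_cong[where f="\<lambda>h. E h \<sigma>"]) (rule ext, simp add: FM power2_eq_square algebra_simps)
    also have "\<dots> = E (\<lambda>\<tau>. (k \<tau>)\<^sup>2) \<sigma> - 2 * E (\<lambda>\<tau>. k \<tau> * j \<tau>) \<sigma> + E (\<lambda>\<tau>. (j \<tau>)\<^sup>2) \<sigma>"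
      unfolding E_def by (simp only: EL_add EL_diff EL_cmult)
    also have "E (\<lambda>\<tau>. (k \<tau>)\<^sup>2) \<sigma> = E (VL q A f) \<sigma>"
    proof -
      have fA2: "indep (set A) (\<lambda>\<tau>. (EL q A f \<tau>)\<^sup>2)" by (rule indep_comb1[OF E1fA])
      have "EL q A (\<lambda>\<tau>. (k \<tau>)\<^sup>2) \<tau> = VL q A f \<tau>" for \<tau>
      proof -
        have "EL q A (\<lambda>\<tau>. (k \<tau>)\<^sup>2) \<tau> = EL q A (\<lambda>\<tau>. ((f \<tau>)\<^sup>2 - 2 * (EL q A f \<tau> * f \<tau>)) + (EL q A f \<tau>)\<^sup>2) \<tau>"
          by (rule arg_cong[where f="\<lambda>h. EL q A h \<tau>"]) (rule ext, simp add: k_def power2_eq_square algebra_simps)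
        also have "\<dots> = EL q A (\<lambda>\<tau>. (f \<tau>)\<^sup>2) \<tau> - 2 * (EL q A f \<tau> * EL q A f \<tau>) + (EL q A f \<tau>)\<^sup>2"
          by (simp only: EL_add EL_diff EL_cmult EL_pull[OF E1fA] EL_indep_id[OF fA2 order_refl])
        also have "\<dots> = VL q A f \<tau>" unfolding VL_def by (simp add: power2_eq_square)
        finally show ?thesis .
      qed
      then have "EL q A (\<lambda>\<tau>. (k \<tau>)\<^sup>2) = VL q A f" by (rule ext)
      then show ?thesis using EE1[of "\<lambda>\<tau>. (k \<tau>)\<^sup>2"] by simp
    qed
    also have "E (\<lambda>\<tau>. k \<tau> * j \<tau>) \<sigma> = E (\<lambda>\<tau>. (j \<tau>)\<^sup>2) \<sigma>"
    proof -
      have Bk: "EL q B k \<tau> = j \<tau>" for \<tau>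
      proof -
        have "EL q B k \<tau> = m \<tau> - EL q B (EL q A f) \<tau>" unfolding k_def EL_diff m_def ..
        also have "EL q B (EL q A f) = c0" unfolding c0_def Eapp by (rule EL_comm)
        finally show ?thesis unfolding j_def .
      qed
      have "EL q B (\<lambda>\<tau>. k \<tau> * j \<tau>) = (\<lambda>\<tau>. (j \<tau>)\<^sup>2)"
        by (rule ext) (simp only: EL_pull2[OF jB] Bk power2_eq_square)
      then show ?thesis using EE2[of "\<lambda>\<tau>. k \<tau> * j \<tau>"] by simp
    qed
    finally have "E (\<lambda>\<tau>. (F \<tau> - M \<tau>)\<^sup>2) \<sigma> = E (VL q A f) \<sigma> - E (\<lambda>\<tau>. (j \<tau>)\<^sup>2) \<sigma>" by simp
    moreover have "0 \<le> E (\<lambda>\<tau>. (j \<tau>)\<^sup>2) \<sigma>" unfolding E_def by (rule EL_nonneg[OF q]) simp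
    ultimately show ?thesis by simp
  qed
  have Var: "VL q (A @ B) f \<sigma> = E (VL q A f) \<sigma> + E (\<lambda>\<tau>. (M \<tau>)\<^sup>2) \<sigma>"
  proof -
    have c02: "indep (set (A @ B)) (\<lambda>\<tau>. (c0 \<tau>)\<^sup>2)" by (rule indep_comb1[OF c0all])
    have "E (VL q A f) \<sigma> = E (\<lambda>\<tau>. (f \<tau>)\<^sup>2) \<sigma> - E (\<lambda>\<tau>. (EL q A f \<tau>)\<^sup>2) \<sigma>"
      unfolding VL_def[abs_def] E_def EL_diff using EE1 unfolding E_def by simp
    moreover have "E (\<lambda>\<tau>. (M \<tau>)\<^sup>2) \<sigma> = E (\<lambda>\<tau>. (EL q A f \<tau>)\<^sup>2) \<sigma> - (c0 \<sigma>)\<^sup>2"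
    proof -
      have "E (\<lambda>\<tau>. (M \<tau>)\<^sup>2) \<sigma> = E (\<lambda>\<tau>. ((EL q A f \<tau>)\<^sup>2 - 2 * (c0 \<tau> * EL q A f \<tau>)) + (c0 \<tau>)\<^sup>2) \<sigma>"
        by (rule arg_cong[where f="\<lambda>h. E h \<sigma>"]) (rule ext, simp add: Mform power2_eq_square algebra_simps)
      also have "\<dots> = E (\<lambda>\<tau>. (EL q A f \<tau>)\<^sup>2) \<sigma> - 2 * (c0 \<sigma> * E (EL q A f) \<sigma>) + (c0 \<sigma>)\<^sup>2"
        unfolding E_def by (simp only: EL_add EL_diff EL_cmult EL_pull[OF c0all] EL_indep_id[OF c02 order_refl])
      also have "E (EL q A f) \<sigma> = c0 \<sigma>" unfolding EE1 c0_def ..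
      finally show ?thesis by (simp add: power2_eq_square)
    qed
    moreover have "VL q (A @ B) f \<sigma> = E (\<lambda>\<tau>. (f \<tau>)\<^sup>2) \<sigma> - (c0 \<sigma>)\<^sup>2"
      unfolding VL_def E_def c0_def ..
    ultimately show ?thesis by simp
  qed
  define a where "a = E (VL q A f) \<sigma>"
  define b where "b = E (\<lambda>\<tau>. \<chi> \<tau> * VL q B f \<tau>) \<sigma>"
  define a' where "a' = E (\<lambda>\<tau>. (F \<tau> - M \<tau>)\<^sup>2) \<sigma>"
  have a0: "0 \<le> a" unfolding a_def E_def by (rule EL_nonneg[OF q]) (rule VL_nonneg[OF q])
  have h1: "VL q (A @ B) f \<sigma> \<le> a + (b + s * a') / (1 - s)"
    using Var PWE Eb unfolding a_def b_def a'_def by simp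
  have h2: "(b + s * a') / (1 - s) \<le> (b + s * a) / (1 - s)"
    using Ea s unfolding a_def a'_def by (intro divide_right_mono) (auto intro: mult_left_mono)
  have h3: "a + (b + s * a) / (1 - s) = (a + b) / (1 - s)"
    using s by (simp add: field_simps)
  have "VL q (A @ B) f \<sigma> \<le> (a + b) / (1 - s)" using h1 h2 h3 by linarith
  then show ?thesis unfolding a_def b_def E_def s_def .
qed

lemma EL_allTrue:
  assumes "distinct xs" "finite S"
  shows "EL q xs (\<lambda>\<sigma>. if (\<forall>x\<in>S. \<sigma> x) then 1 else 0) \<sigma> =
    (1 - q) ^ card (S \<inter> set xs) * (if (\<forall>x\<in>S - set xs. \<sigma> x) then 1 else 0)"
  using assms(1)
proof (induction xs arbitrary: \<sigma>)
  case Nil then show ?case by simp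
next
  case (Cons x xs)
  define c where "c = card (S \<inter> set xs)"
  define ind where "ind \<tau> = (if (\<forall>y\<in>S - set xs. \<tau> y) then 1 else (0::real))" for \<tau>
  have IH: "EL q xs (\<lambda>\<sigma>. if (\<forall>x\<in>S. \<sigma> x) then 1 else 0) \<tau> = (1 - q) ^ c * ind \<tau>" for \<tau>
    using Cons unfolding c_def ind_def by simp
  have xn: "x \<notin> set xs" using Cons.prems by simp
  have "EL q (x # xs) (\<lambda>\<sigma>. if (\<forall>x\<in>S. \<sigma> x) then 1 else 0) \<sigma>
      = (1 - q) * ((1 - q) ^ c * ind (\<sigma>(x := True))) + q * ((1 - q) ^ c * ind (\<sigma>(x := False)))"
    by (simp add: ee_def IH)
  also have "\<dots> = (1 - q) ^ card (S \<inter> set (x # xs)) * (if (\<forall>y\<in>S - set (x # xs). \<sigma> y) then 1 else 0)"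
  proof (cases "x \<in> S")
    case True
    have c1: "card (S \<inter> set (x # xs)) = Suc c"
    proof -
      have "S \<inter> set (x # xs) = insert x (S \<inter> set xs)" using True by auto
      then show ?thesis unfolding c_def using xn assms(2) by simp
    qed
    have "ind (\<sigma>(x := False)) = 0" unfolding ind_def using True xn by auto
    moreover have "ind (\<sigma>(x := True)) = (if (\<forall>y\<in>S - set (x # xs). \<sigma> y) then 1 else 0)"
      unfolding ind_def using xn by auto
    ultimately show ?thesis unfolding c1 by simp
  next
    case False
    have c1: "S \<inter> set (x # xs) = S \<inter> set xs" "S - set (x # xs) = S - set xs" using False by auto
    have "ind (\<sigma>(x := b)) = ind \<sigma>" for b unfolding ind_def using False by auto
    then show ?thesis unfolding c1 c_def ind_def by (simp add: algebra_simps)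
  qed
  finally show ?case .
qed

lemma ell_step_ge:
  assumes "1 \<le> r"
  shows "ell r (Suc n) \<le> ell r (Suc (Suc n))"
proof -
  define l where "l = ell r (Suc n)"
  have "real l * 1 \<le> real l * real r" using assms by (intro mult_left_mono) auto
  then have "(1 / real r) * real l \<le> real l" using assms by (simp add: divide_le_eq)
  then have d: "nat \<lceil>real l / real r\<rceil> \<le> l" by (simp add: ceiling_le_iff nat_le_iff)
  have e: "ell r (Suc (Suc n)) = 2 * l - nat \<lceil>real l / real r\<rceil>" unfolding l_def by simp
  have "l \<le> ell r (Suc (Suc n))" unfolding e using d by linarith
  then show ?thesis unfolding l_def .
qed

lemma ell_ge3: "1 \<le> r \<Longrightarrow> 3 \<le> ell r n"
proof (induction n rule: less_induct)
  case (less n)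
  show ?case
  proof (cases n)
    case (Suc k)
    show ?thesis
    proof (cases k)
      case (Suc j)
      have "3 \<le> ell r (Suc j)" using less Suc \<open>n = Suc k\<close> by simp
      then show ?thesis using ell_step_ge[OF less.prems, of j] Suc \<open>n = Suc k\<close> by simp
    qed (simp add: Suc)
  qed simp
qed

lemma d_bounds:
  assumes "1 \<le> r" "1 \<le> l"
  shows "1 \<le> nat \<lceil>(1 / real r) * real l\<rceil>" "nat \<lceil>(1 / real r) * real l\<rceil> \<le> l"
proof -
  have "0 < (1 / real r) * real l" using assms by simp
  then show "1 \<le> nat \<lceil>(1 / real r) * real l\<rceil>" by linarith
  have "real l * 1 \<le> real l * real r" using assms by (intro mult_left_mono) auto
  then have "(1 / real r) * real l \<le> real l" using assms by (simp add: divide_le_eq)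
  then show "nat \<lceil>(1 / real r) * real l\<rceil> \<le> l" by (simp add: ceiling_le_iff nat_le_iff)
qed

lemma main_ineq:
  assumes q: "0 < q" "q < 1" and dl: "1 \<le> d" "d \<le> l" and L: "L = 2 * l - d"
    and gl: "0 < east_gap q l"
  shows "east_Var q L f \<le> (2 * east_Dir q L f / east_gap q l) / (1 - sqrt ((1 - q) ^ d))"
proof -
  have q': "0 \<le> q" "q \<le> 1" using q by auto
  define gg where "gg = east_gap q l"
  define Full where "Full = [1..<Suc L]"
  define A where "A = [1..<Suc l]"
  define B where "B = [Suc l..<Suc L]"
  define t0 :: "nat \<Rightarrow> bool" where "t0 = (\<lambda>_. undefined)"
  have lL: "l \<le> L" using L dl by simp
  have FAB: "Full = A @ B" unfolding Full_def A_def B_def using lL by (intro upt_split) auto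
  define h where "h y \<tau> = east_c y \<tau> * VL q [y] f \<tau>" for y \<tau>
  have hnn: "0 \<le> h y \<tau>" for y \<tau> unfolding h_def by (intro mult_nonneg_nonneg east_c_nonneg VL_nonneg q')
  have ELhnn: "0 \<le> EL q xs (h y) \<sigma>" for xs y \<sigma> by (rule EL_nonneg[OF q' hnn])
  define D where "D = (\<Sum>y\<in>{1..L}. EL q Full (h y) t0)"
  have Dir: "east_Dir q L f = D" unfolding east_Dir_EL D_def Full_def t0_def h_def ..
  have Var: "east_Var q L f = VL q Full f t0" unfolding east_Var_EL Full_def t0_def ..
  define Ov where "Ov = {l - d + 1..l}"
  define \<epsilon> :: real where "\<epsilon> = (1 - q) ^ d"
  have eps: "0 < \<epsilon>" "\<epsilon> < 1" unfolding \<epsilon>_def using q dl by (auto intro: power_less_one_iff[THEN iffD2])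
  define \<chi> where "\<chi> \<sigma> = (if \<exists>x\<in>Ov. \<not> \<sigma> x then 1 else (0::real))" for \<sigma>
  have chi01: "\<chi> \<sigma> = 0 \<or> \<chi> \<sigma> = 1" for \<sigma> unfolding \<chi>_def by auto
  have chiB: "indep (set B) \<chi>" unfolding indep_def
  proof (intro allI impI)
    fix \<sigma> :: "nat \<Rightarrow> bool" and x b assume "x \<in> set B"
    then have "x \<notin> Ov" by (auto simp: B_def Ov_def)
    then have "\<forall>y\<in>Ov. (\<sigma>(x := b)) y = \<sigma> y" by auto
    then show "\<chi> (\<sigma>(x := b)) = \<chi> \<sigma>" unfolding \<chi>_def by simp
  qed
  have heps: "EL q A (\<lambda>\<sigma>. 1 - \<chi> \<sigma>) \<sigma> = \<epsilon>" for \<sigma>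
  proof -
    have "EL q A (\<lambda>\<sigma>. 1 - \<chi> \<sigma>) \<sigma> = EL q A (\<lambda>\<sigma>. if (\<forall>x\<in>Ov. \<sigma> x) then 1 else 0) \<sigma>"
      by (rule arg_cong[where f="\<lambda>h. EL q A h \<sigma>"]) (rule ext, simp add: \<chi>_def)
    also have "\<dots> = (1 - q) ^ card (Ov \<inter> set A) * (if (\<forall>x\<in>Ov - set A. \<sigma> x) then 1 else 0)"
      by (rule EL_allTrue) (auto simp: A_def Ov_def)
    finally have e: "EL q A (\<lambda>\<sigma>. 1 - \<chi> \<sigma>) \<sigma> = (1 - q) ^ card (Ov \<inter> set A) * (if (\<forall>x\<in>Ov - set A. \<sigma> x) then 1 else 0)" .
    have o1: "Ov \<inter> set A = Ov" unfolding Ov_def A_def using dl by auto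
    have o2: "\<forall>x\<in>Ov - set A. \<sigma> x" unfolding Ov_def A_def using dl by auto
    have o3: "card Ov = d" unfolding Ov_def using dl by simp
    show ?thesis using e unfolding \<epsilon>_def o1 o3 using o2 by simp
  qed
  define a where "a = EL q Full (VL q A f) t0"
  define b where "b = EL q Full (\<lambda>\<sigma>. \<chi> \<sigma> * VL q B f \<sigma>) t0"
  have blk: "VL q Full f t0 \<le> (a + b) / (1 - sqrt \<epsilon>)"
    unfolding FAB a_def b_def by (rule block[OF q' eps chi01 chiB heps])
  have left: "a \<le> D / gg"
  proof -
    have pt: "VL q A f \<sigma> \<le> (\<Sum>y\<in>{1..l}. EL q A (h y) \<sigma>) / gg" for \<sigma>
      using GP[OF q gl order_refl, of 0 \<sigma> f] unfolding A_def h_def gg_def by simp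
    have "a \<le> EL q Full (\<lambda>\<sigma>. (\<Sum>y\<in>{1..l}. EL q A (h y) \<sigma>) / gg) t0"
      unfolding a_def by (rule EL_mono[OF q' pt])
    also have "\<dots> = (\<Sum>y\<in>{1..l}. EL q Full (EL q A (h y)) t0) / gg"
      by (simp only: EL_cdiv EL_sum)
    also have "\<dots> = (\<Sum>y\<in>{1..l}. EL q Full (h y) t0) / gg"
      using EL_absorb[of A Full q] FAB by simp
    also have "\<dots> \<le> D / gg" unfolding D_def using gl lL unfolding gg_def
      by (intro divide_right_mono sum_mono2) (auto intro: ELhnn)
    finally show ?thesis .
  qed
  define I where "I x \<sigma> = (if \<not> \<sigma> x \<and> (\<forall>z. l - d + 1 \<le> z \<and> z < x \<longrightarrow> \<sigma> z) then 1 else (0::real))" for x \<sigma>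
  have I01: "0 \<le> I x \<sigma>" "I x \<sigma> \<le> 1" for x \<sigma> unfolding I_def by auto
  have finO: "finite Ov" unfolding Ov_def by simp
  have R1: "\<chi> \<sigma> \<le> (\<Sum>x\<in>Ov. I x \<sigma>)" for \<sigma>
  proof (cases "\<exists>x\<in>Ov. \<not> \<sigma> x")
    case True
    define x0 where "x0 = Min {x\<in>Ov. \<not> \<sigma> x}"
    have ne: "{x\<in>Ov. \<not> \<sigma> x} \<noteq> {}" using True by auto
    have fin: "finite {x\<in>Ov. \<not> \<sigma> x}" using finO by simp
    have x0: "x0 \<in> Ov" "\<not> \<sigma> x0" using Min_in[OF fin ne] unfolding x0_def by auto
    have "\<sigma> z" if "l - d + 1 \<le> z" "z < x0" for z
    proof (rule ccontr)
      assume "\<not> \<sigma> z"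
      then have "z \<in> {x\<in>Ov. \<not> \<sigma> x}" using that x0(1) unfolding Ov_def by auto
      then have "x0 \<le> z" unfolding x0_def using Min_le[OF fin] by blast
      then show False using that by simp
    qed
    then have "I x0 \<sigma> = 1" unfolding I_def using x0 by auto
    then have "1 \<le> (\<Sum>x\<in>Ov. I x \<sigma>)" using member_le_sum[OF x0(1), of "\<lambda>x. I x \<sigma>"] I01 finO by auto
    then show ?thesis unfolding \<chi>_def by simp
  next
    case False then show ?thesis unfolding \<chi>_def by (simp add: sum_nonneg I01)
  qed
  have R2: "(\<Sum>x\<in>Ov. I x \<sigma>) \<le> 1" for \<sigma>
  proof (cases "\<exists>x0\<in>Ov. I x0 \<sigma> = 1")
    case True
    then obtain x0 where x0: "x0 \<in> Ov" "I x0 \<sigma> = 1" by blast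
    have z: "I x \<sigma> = 0" if "x \<in> Ov - {x0}" for x
    proof (rule ccontr)
      assume "I x \<sigma> \<noteq> 0"
      then have ix: "\<not> \<sigma> x" "\<forall>z. l - d + 1 \<le> z \<and> z < x \<longrightarrow> \<sigma> z" unfolding I_def by (auto split: if_splits)
      have ix0: "\<not> \<sigma> x0" "\<forall>z. l - d + 1 \<le> z \<and> z < x0 \<longrightarrow> \<sigma> z" using x0(2) unfolding I_def by (auto split: if_splits)
      have "x \<noteq> x0" using that by auto
      then show False using ix ix0 that x0(1) unfolding Ov_def
        by (cases "x < x0") auto
    qed
    have "(\<Sum>x\<in>Ov. I x \<sigma>) = I x0 \<sigma> + (\<Sum>x\<in>Ov - {x0}. I x \<sigma>)" using sum.remove[OF finO x0(1)] by simp
    also have "(\<Sum>x\<in>Ov - {x0}. I x \<sigma>) = 0" using z by simp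
    finally show ?thesis using x0 by simp
  next
    case False
    then have "I x \<sigma> = 0" if "x \<in> Ov" for x using that unfolding I_def by (auto split: if_splits)
    then show ?thesis by simp
  qed
  have R45: "EL q Full (\<lambda>\<sigma>. I x \<sigma> * VL q B f \<sigma>) t0 \<le> (\<Sum>y\<in>{1..L}. EL q Full (\<lambda>\<sigma>. I x \<sigma> * h y \<sigma>) t0) / gg"
    if xO: "x \<in> Ov" for x
  proof -
    have xl: "l - d + 1 \<le> x" "x \<le> l" using xO unfolding Ov_def by auto
    define Cx where "Cx = [Suc x..<Suc L]"
    define Dx where "Dx = [Suc x..<Suc l]"
    have CDB: "Cx = Dx @ B" unfolding Cx_def Dx_def B_def using xl lL by (intro upt_split) auto
    have ICx: "indep (set Cx) (I x)" unfolding indep_def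
    proof (intro allI impI)
      fix \<sigma> :: "nat \<Rightarrow> bool" and y b assume "y \<in> set Cx"
      then have yx: "x < y" unfolding Cx_def by auto
      then have "(\<sigma>(y := b)) x = \<sigma> x" "\<forall>z. z < x \<longrightarrow> (\<sigma>(y := b)) z = \<sigma> z" by auto
      then show "I x (\<sigma>(y := b)) = I x \<sigma>" unfolding I_def by presburger
    qed
    have IDx: "indep (set Dx) (I x)" unfolding indep_def
    proof (intro allI impI)
      fix \<sigma> :: "nat \<Rightarrow> bool" and y b assume "y \<in> set Dx"
      then have yx: "x < y" unfolding Dx_def by auto
      then have "(\<sigma>(y := b)) x = \<sigma> x" "\<forall>z. z < x \<longrightarrow> (\<sigma>(y := b)) z = \<sigma> z" by auto
      then show "I x (\<sigma>(y := b)) = I x \<sigma>" unfolding I_def by presburger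
    qed
    have DxF: "set Dx \<subseteq> set Full" unfolding Dx_def Full_def using lL by auto
    have CxF: "set Cx \<subseteq> set Full" unfolding Cx_def Full_def by auto
    have "EL q Full (\<lambda>\<sigma>. I x \<sigma> * VL q B f \<sigma>) t0 = EL q Full (EL q Dx (\<lambda>\<sigma>. I x \<sigma> * VL q B f \<sigma>)) t0"
      using EL_absorb[OF DxF] by simp
    also have "\<dots> \<le> EL q Full (\<lambda>\<sigma>. I x \<sigma> * VL q Cx f \<sigma>) t0"
    proof (rule EL_mono[OF q'])
      fix \<sigma>
      have "EL q Dx (\<lambda>\<sigma>. I x \<sigma> * VL q B f \<sigma>) \<sigma> = I x \<sigma> * EL q Dx (VL q B f) \<sigma>" by (rule EL_pull[OF IDx])
      also have "\<dots> \<le> I x \<sigma> * VL q Cx f \<sigma>"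
        unfolding CDB VL_append using VL_nonneg[OF q'] I01 by (intro mult_left_mono) auto
      finally show "EL q Dx (\<lambda>\<sigma>. I x \<sigma> * VL q B f \<sigma>) \<sigma> \<le> I x \<sigma> * VL q Cx f \<sigma>" .
    qed
    also have "\<dots> \<le> EL q Full (\<lambda>\<sigma>. (\<Sum>y\<in>{Suc x..L}. EL q Cx (\<lambda>\<sigma>. I x \<sigma> * h y \<sigma>) \<sigma>) / gg) t0"
    proof (rule EL_mono[OF q'])
      fix \<sigma>
      have "I x \<sigma> * VL q Cx f \<sigma> \<le> I x \<sigma> * ((\<Sum>y\<in>{Suc x..L}. EL q Cx (h y) \<sigma>) / gg)"
      proof (cases "I x \<sigma> = 0")
        case False
        then have sx: "\<not> \<sigma> x" unfolding I_def by (auto split: if_splits)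
        have m: "L - x \<le> l" using xl L dl by simp
        have e1: "Suc (x + (L - x)) = Suc L" "x + (L - x) = L" using xl lL by auto
        have "VL q Cx f \<sigma> \<le> (\<Sum>y\<in>{Suc x..L}. EL q Cx (h y) \<sigma>) / gg"
          using GP[OF q gl m, of x \<sigma> f] sx unfolding e1 Cx_def h_def gg_def by simp
        then show ?thesis using I01 by (intro mult_left_mono) auto
      qed simp
      also have "\<dots> = (\<Sum>y\<in>{Suc x..L}. EL q Cx (\<lambda>\<sigma>. I x \<sigma> * h y \<sigma>) \<sigma>) / gg"
        by (simp add: EL_pull[OF ICx] sum_distrib_left)
      finally show "I x \<sigma> * VL q Cx f \<sigma> \<le> (\<Sum>y\<in>{Suc x..L}. EL q Cx (\<lambda>\<sigma>. I x \<sigma> * h y \<sigma>) \<sigma>) / gg" .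
    qed
    also have "\<dots> = (\<Sum>y\<in>{Suc x..L}. EL q Full (EL q Cx (\<lambda>\<sigma>. I x \<sigma> * h y \<sigma>)) t0) / gg"
      by (simp only: EL_cdiv EL_sum)
    also have "\<dots> = (\<Sum>y\<in>{Suc x..L}. EL q Full (\<lambda>\<sigma>. I x \<sigma> * h y \<sigma>) t0) / gg"
      using EL_absorb[OF CxF] by simp
    also have "\<dots> \<le> (\<Sum>y\<in>{1..L}. EL q Full (\<lambda>\<sigma>. I x \<sigma> * h y \<sigma>) t0) / gg"
      using gl unfolding gg_def
      by (intro divide_right_mono sum_mono2) (auto intro!: EL_nonneg[OF q'] mult_nonneg_nonneg I01 hnn)
    finally show ?thesis .
  qed
  have right: "b \<le> D / gg"
  proof -
    have "b \<le> EL q Full (\<lambda>\<sigma>. \<Sum>x\<in>Ov. I x \<sigma> * VL q B f \<sigma>) t0"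
      unfolding b_def
    proof (rule EL_mono[OF q'])
      fix \<sigma>
      show "\<chi> \<sigma> * VL q B f \<sigma> \<le> (\<Sum>x\<in>Ov. I x \<sigma> * VL q B f \<sigma>)"
        using R1[of \<sigma>] VL_nonneg[OF q', of B f \<sigma>] by (simp add: sum_distrib_right[symmetric] mult_right_mono)
    qed
    also have "\<dots> = (\<Sum>x\<in>Ov. EL q Full (\<lambda>\<sigma>. I x \<sigma> * VL q B f \<sigma>) t0)" by (rule EL_sum)
    also have "\<dots> \<le> (\<Sum>x\<in>Ov. (\<Sum>y\<in>{1..L}. EL q Full (\<lambda>\<sigma>. I x \<sigma> * h y \<sigma>) t0) / gg)"
      by (rule sum_mono) (rule R45)
    also have "\<dots> = (\<Sum>y\<in>{1..L}. EL q Full (\<lambda>\<sigma>. (\<Sum>x\<in>Ov. I x \<sigma>) * h y \<sigma>) t0) / gg"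
      by (simp add: sum_divide_distrib[symmetric] sum_distrib_right EL_sum sum.swap[of _ Ov])
    also have "\<dots> \<le> D / gg" unfolding D_def using gl unfolding gg_def
    proof (intro divide_right_mono sum_mono EL_mono[OF q'])
      fix y \<sigma>
      show "(\<Sum>x\<in>Ov. I x \<sigma>) * h y \<sigma> \<le> h y \<sigma>" using R2[of \<sigma>] hnn[of y \<sigma>] by (simp add: mult_left_le_one_le sum_nonneg I01)
    qed auto
    finally show ?thesis .
  qed
  have "VL q Full f t0 \<le> (D / gg + D / gg) / (1 - sqrt \<epsilon>)"
  proof -
    have "0 < 1 - sqrt \<epsilon>" using eps by simp
    then show ?thesis using blk left right by (smt (verit) divide_right_mono)
  qed
  then show ?thesis unfolding Var Dir gg_def \<epsilon>_def by simp
qed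

lemma gap_mono_aux:
  assumes q: "0 < q" "q < 1" and lL: "l \<le> L" and l1: "1 \<le> l" and gL: "0 < east_gap q L"
  shows "east_gap q L \<le> east_gap q l"
proof (rule gap_lower[OF q l1])
  fix g assume "east_Var q l g \<noteq> 0"
  have "east_Var q l g \<le> east_Dir q l g / east_gap q L"
    using GP[OF q gL lL, of 0 "\<lambda>_. undefined" g] unfolding east_Var_EL east_Dir_EL by simp
  then show "east_gap q L * east_Var q l g \<le> east_Dir q l g"
    using gL by (simp add: le_divide_eq mult.commute)
qed

theorem mainTheorem10:
  fixes q :: real and r i :: nat
  assumes "0 < q" and "q < 1/2" and "r > 2" and "2 \<le> i" and "i \<le> r"
  shows "T_rel q (ell r i) \<le> 2 / (1 - sqrt (eps q r (i - 1))) * T_rel q (ell r (i - 1))"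
proof -
  have q: "0 < q" "q < 1" using assms by auto
  obtain j where ij: "i = Suc (Suc j)" using assms(4) by (metis add_2_eq_Suc le_Suc_ex)
  define l where "l = ell r (Suc j)"
  define d where "d = nat \<lceil>(1 / real r) * real l\<rceil>"
  define L where "L = ell r i"
  have r1: "1 \<le> r" using assms by simp
  have l3: "3 \<le> l" unfolding l_def by (rule ell_ge3[OF r1])
  have d1: "1 \<le> d" "d \<le> l" unfolding d_def using d_bounds[OF r1, of l] l3 by auto
  have LL: "L = 2 * l - d" unfolding L_def ij l_def d_def by (rule ell.simps(3))
  have im1: "i - 1 = Suc j" using ij by simp
  have epsd: "eps q r (i - 1) = (1 - q) ^ d" unfolding eps_def im1 d_def l_def ..
  define \<epsilon> :: real where "\<epsilon> = (1 - q) ^ d"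
  have eps: "0 < \<epsilon>" "\<epsilon> < 1" unfolding \<epsilon>_def using q d1 by (auto intro: power_less_one_iff[THEN iffD2])
  have s: "0 < 1 - sqrt \<epsilon>" using eps by simp
  have lL: "l \<le> L" using LL d1 by simp
  have l1: "1 \<le> l" using l3 by simp
  have L1: "1 \<le> L" using lL l1 by simp
  have goal: "T_rel q L \<le> 2 / (1 - sqrt \<epsilon>) * T_rel q l"
  proof (cases "0 < east_gap q l")
    case True
    define c where "c = (1 - sqrt \<epsilon>) * east_gap q l / 2"
    have c0: "0 < c" unfolding c_def using True s by simp
    have "c \<le> east_gap q L"
    proof (rule gap_lower[OF q L1])
      fix f assume "east_Var q L f \<noteq> 0"
      have "east_Var q L f \<le> (2 * east_Dir q L f / east_gap q l) / (1 - sqrt \<epsilon>)"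
        using main_ineq[OF q d1 LL True, of f] unfolding \<epsilon>_def .
      then have "east_Var q L f * (1 - sqrt \<epsilon>) \<le> 2 * east_Dir q L f / east_gap q l"
        by (simp only: pos_le_divide_eq[OF s])
      then have "east_Var q L f * (1 - sqrt \<epsilon>) * east_gap q l \<le> 2 * east_Dir q L f"
        by (simp only: pos_le_divide_eq[OF True])
      then show "c * east_Var q L f \<le> east_Dir q L f" unfolding c_def by (simp add: algebra_simps)
    qed
    then have "1 / east_gap q L \<le> 1 / c" using c0 by (intro divide_left_mono) auto
    also have "1 / c = 2 / (1 - sqrt \<epsilon>) * (1 / east_gap q l)" unfolding c_def by simp
    finally show ?thesis unfolding T_rel_def .
  next
    case False
    then have g0: "east_gap q l = 0" using gap_nonneg[OF q l1] by simp
    have "\<not> 0 < east_gap q L"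
    proof
      assume "0 < east_gap q L"
      then have "east_gap q L \<le> east_gap q l" by (rule gap_mono_aux[OF q lL l1])
      then show False using \<open>0 < east_gap q L\<close> g0 by simp
    qed
    then have "T_rel q L \<le> 0" unfolding T_rel_def by simp
    then show ?thesis unfolding T_rel_def g0 by simp
  qed
  have e2: "eps q r (Suc j) = (1 - q) ^ d" using epsd im1 by simp
  show ?thesis unfolding im1 e2 using goal unfolding L_def \<epsilon>_def l_def .
qed

end
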